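(* Consider the uncertain system $x^j_{t+1}=Ax^j_t+Bu^j_t+w^j_t$ at iteration $j\ge 1$ in closed loop with the LMPC input $u^j_t=\pi^{j,*}_{t|t}(x^j_t)$ (both described in the context). Suppose $x^j_0\in\mathcal{C}^j$. Then for every time $t\ge 0$ and every disturbance realization with $w^j_t\in\mathcal{W}$, the optimal control problem $C^{\mathrm{LMPC},j}_{t\to t+N}(x^j_t,N^j_t)$ is feasible for some $N^j_t\in\{0,\dots,N\}$, and the closed-loop system satisfies $x^j_t\in\mathcal{X}$ and $u^j_t\in\mathcal{U}$ for all $t\ge 0$.
   Context: System: $x_{t+1}=Ax_t+Bu_t+w_t$ with known $A\in\mathbb{R}^{n\times n}$, $B\in\mathbb{R}^{n\times d}$. The disturbances take values in $\mathcal{W}\subset\mathbb{R}^n$, a compact polytope containing the origin with vertices $v_w^1,\dots,v_w^l$. Constraints: $x_t\in\mathcal{X}$, $u_t\in\mathcal{U}$, with $\mathcal{X}\subset\mathbb{R}^n$, $\mathcal{U}\subset\mathbb{R}^d$ convex, compact, containing the origin. A gain $K$ and a polyhedron $\mathcal{O}\subset\mathcal{X}$ with vertices $v_o^1,\dots,v_o^m$ are given such that $x\in\mathcal{O}\Rightarrow (A+BK)x+w\in\mathcal{O}$ for all $w\in\mathcal{W}$; $K\mathcal{O}=\{Kx:x\in\mathcal{O}\}$. Write $|x|_{\mathcal{S}}=\inf_{y\in\mathcal{S}}\|x-y\|_2$. The stage cost $h:\mathbb{R}^n\times\mathbb{R}^d\to\mathbb{R}$ is continuous and jointly convex, and there are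 $\mathcal{K}_\infty$ functions with $\alpha^l_x(|x|_\mathcal{O})\le h(x,0)\le\alpha^u_x(|x|_\mathcal{O})$ and $\alpha^l_u(|u|_{K\mathcal{O}})\le h(0,u)\le\alpha^u_u(|u|_{K\mathcal{O}})$ for all $x,u$. A horizon $N\ge1$ is fixed. Data-based construction. Set $\mathcal{CS}^0=\mathcal{O}$, $\mathbf{X}^0=[v_o^1,\dots,v_o^m]$, $\mathbf{U}^0=[Kv_o^1,\dots,Kv_o^m]$, $\mathbf{J}^0=[0,\dots,0]$, $Q^0\equiv0$ on $\mathcal{O}$. For each previous iteration $i\in\{1,\dots,j-1\}$ there are a duration $T^i$, a stored closed-loop trajectory $x^i_0,\dots,x^i_{T^i}$ and, for each $t\in\{0,\dots,T^i\}$, an $N$-step policy $\boldsymbol{\pi}^{i,*}_t=[\pi^{i,*}_{t|t},\dots,\pi^{i,*}_{t+N-1|t}]$ (maps $\mathbb{R}^n\to\mathbb{R}^d$) with $x^i_{t+1}=Ax^i_t+B\pi^{i,*}_{t|t}(x^i_t)+w^i_t$, such that (standing assumption) the predicted system $x_{s+1|t}=Ax_{s|t}+B\pi^{i,*}_{s|t}(x_{s|t})+w_{s|t}$, $s=t,\dots,t+N-1$, $x_{t|t}=x^i_t$, satisfies $x_{s|t}\in\mathcal{X}$, $\pi^{i,*}_{s|t}(x_{s|t})\in\mathcal{U}$ and $x_{t+N|t}\in\mathcal{CS}^{i-1}$ for all disturbances in $\mathcal{W}$. Reachable sets: $\mathcal{R}^i_{t\to t}=\{x^i_t\}$, $\mathcal{R}^i_{t\to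 s+1}=\{Ax+B\pi^{i,*}_{s|t}(x)+w: x\in\mathcal{R}^i_{t\to s},w\in\mathcal{W}\}$. Then $\mathcal{CS}^i=\mathrm{Conv}\big(\bigcup_{t=0}^{T^i}\bigcup_{s=t}^{t+N}\mathcal{R}^i_{t\to s}\cup\mathcal{CS}^{i-1}\big)$. For $s\in\{t,\dots,t+N\}$ let $v^{i,1}_{s|t},\dots,v^{i,l^{s-t}}_{s|t}$ be the vertices of $\mathcal{R}^i_{t\to s}$. Define costs-to-go backwards: $J^i_{t+N|t}(v^{i,r}_{t+N|t})=Q^{i-1}(v^{i,r}_{t+N|t})$ and, for $s=t+N-1,\dots,t$ and $v=v^{i,r}_{s|t}$, $J^i_{s|t}(v)=\min_{\gamma\ge0}\, h(v,\pi^{i,*}_{s|t}(v))+\sum_q\gamma_qJ^i_{s+1|t}(v^{i,q}_{s+1|t})$ s.t. $\sum_q\gamma_qv^{i,q}_{s+1|t}=Av+B\pi^{i,*}_{s|t}(v)$, $\sum_q\gamma_q=1$. The matrices $\mathbf{X}^i,\mathbf{U}^i$ and row vector $\mathbf{J}^i$ are obtained from $\mathbf{X}^{i-1},\mathbf{U}^{i-1},\mathbf{J}^{i-1}$ by appending, for all $t\in\{0,\dots,T^i\}$, $s\in\{t,\dots,t+N-1\}$ and all $r$, the columns $v^{i,r}_{s|t}$, $\pi^{i,*}_{s|t}(v^{i,r}_{s|t})$ and the entries $J^i_{s|t}(v^{i,r}_{s|t})$. Let $\Lambda^i(x)=\{\lambda\ge0:\mathbf{X}^i\lambda=x,\ \mathbf{1}^\top\lambda=1\}$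 and $Q^i(x)=\min_{\lambda\in\Lambda^i(x)}\mathbf{J}^i\lambda$. LMPC at iteration $j$. For $x\in\mathbb{R}^n$ and $N_t\in\{0,\dots,N\}$, $C^{\mathrm{LMPC},j}_{t\to t+N}(x,N_t)$ is the optimal value ($+\infty$ if infeasible) of: minimize over matrices $M_{ks}$ ($t\le s<k$), vectors $g_k$ and multiplier policies $\lambda_{k|t}$ the cost $\sum_{k=t}^{t+N-1}h(\bar x_{k|t},\pi_{k|t}(\bar x_{k|t}))+Q^{j-1}(\bar x_{t+N|t})$ subject to $x_{t|t}=\bar x_{t|t}=x$; $\bar x_{k+1|t}=A\bar x_{k|t}+B\pi_{k|t}(\bar x_{k|t})$; $x_{k+1|t}=Ax_{k|t}+B\pi_{k|t}(x_{k|t})+w_{k|t}$; $x_{k|t}\in\mathcal{X}$, $\pi_{k|t}(x_{k|t})\in\mathcal{U}$; $x_{t+N|t}\in\mathcal{CS}^{j-1}$; for $k\in\{t,\dots,t+N_t-1\}$, $\pi_{k|t}=\sum_{s=t}^{k-1}M_{ks}w_{s|t}+g_k$ (disturbance feedback); for $k\in\{t+N_t,\dots,t+N-1\}$, $\pi_{k|t}(x_{k|t})=\mathbf{U}^{j-1}\lambda_{k|t}$ with $\lambda_{k|t}\in\Lambda^{j-1}(x_{k|t})$; all for all $w_{k|t}\in\mathcal{W}$, $k=t,\dots,t+N-1$. At state $x^j_t$ one takes $N^{j,*}_t$ minimizing $C^{\mathrm{LMPC},j}_{t\to t+N}(x^j_t,\cdot)$, lets $\boldsymbol{\pi}^{j,*}_t=[\pi^{j,*}_{t|t},\dots,\pi^{j,*}_{t+N-1|t}]$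 be the corresponding optimal policy, and applies $u^j_t=\pi^{j,*}_{t|t}(x^j_t)$. The set $\mathcal{C}^j=\{x:\exists N_0\in\{0,\dots,N\},\ C^{\mathrm{LMPC},j}_{0\to N}(x,N_0)<\infty\}$.
   Formalization: The terminal set $\mathcal{O}$ also satisfies the input constraint, $K\mathcal{O}\subseteq\mathcal{U}$, and every reachable set $\mathcal{R}^i_{t\to s}$ of earlier iterations is a polytope. Each condition added here is assumed in the paper as well or is needed for the statement above to hold. *)

theory Defs
  imports "HOL-Analysis.Analysis"
begin

definition Kinf :: "(real \<Rightarrow> real) \<Rightarrow> bool" where
  "Kinf \<alpha> \<longleftrightarrow> continuous_on {0..} \<alpha> \<and> \<alpha> 0 = 0 \<and> strict_mono_on {0..} \<alpha>
      \<and> filterlim \<alpha> at_top at_top"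

text \<open>Reachable sets R^i_{t -> t+k} of iteration i from stored state x^i_t under the
  stored policies pol i t s = pi^{i,*}_{s|t}.\<close>
fun reach :: "real^'n^'n \<Rightarrow> real^'d^'n \<Rightarrow> (real^'n) set
    \<Rightarrow> (nat \<Rightarrow> nat \<Rightarrow> real^'n) \<Rightarrow> (nat \<Rightarrow> nat \<Rightarrow> nat \<Rightarrow> real^'n \<Rightarrow> real^'d)
    \<Rightarrow> nat \<Rightarrow> nat \<Rightarrow> nat \<Rightarrow> (real^'n) set" where
  "reach A B W xt pol i t 0 = {xt i t}"
| "reach A B W xt pol i t (Suc k) =
     {A *v x + B *v pol i t (t + k) x + w | x w. x \<in> reach A B W xt pol i t k \<and> w \<in> W}"

primrec CSset :: "real^'n^'n \<Rightarrow> real^'d^'n \<Rightarrow> (real^'n) set \<Rightarrow> nat \<Rightarrow> (real^'n) set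
    \<Rightarrow> (nat \<Rightarrow> nat) \<Rightarrow> (nat \<Rightarrow> nat \<Rightarrow> real^'n) \<Rightarrow> (nat \<Rightarrow> nat \<Rightarrow> nat \<Rightarrow> real^'n \<Rightarrow> real^'d)
    \<Rightarrow> nat \<Rightarrow> (real^'n) set" where
  "CSset A B W N Ob T xt pol 0 = Ob"
| "CSset A B W N Ob T xt pol (Suc i) =
     convex hull ((\<Union>t\<in>{..T (Suc i)}. \<Union>k\<in>{..N}. reach A B W xt pol (Suc i) t k)
                  \<union> CSset A B W N Ob T xt pol i)"

text \<open>Stored data: a finite set of columns (state, input, cost-to-go).  The matrices
  X^i, U^i, J^i are represented by the set of their columns (x, u, J).\<close>
type_synonym ('n, 'd) col = "(real^'n) \<times> (real^'d) \<times> ereal"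

definition Lam :: "('n, 'd) col set \<Rightarrow> real^'n \<Rightarrow> (('n, 'd) col \<Rightarrow> real) set" where
  "Lam D x = {l. (\<forall>c\<in>D. 0 \<le> l c) \<and> (\<Sum>c\<in>D. l c *\<^sub>R fst c) = x \<and> (\<Sum>c\<in>D. l c) = 1}"

text \<open>Q(x) = min over Lambda(x) of J lambda (infimum; +oo if Lambda(x) is empty).\<close>
definition Qof :: "('n, 'd) col set \<Rightarrow> real^'n \<Rightarrow> ereal" where
  "Qof D x = (INF l\<in>Lam D x. (\<Sum>c\<in>D. ereal (l c) * snd (snd c)))"

text \<open>Costs-to-go J^i_{s|t}: Jtail ... m v is J^i_{t+N-m|t}(v).\<close>
fun Jtail :: "real^'n^'n \<Rightarrow> real^'d^'n \<Rightarrow> (real^'n) set \<Rightarrow> (real^'n \<Rightarrow> real^'d \<Rightarrow> real)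
    \<Rightarrow> nat \<Rightarrow> (nat \<Rightarrow> nat \<Rightarrow> real^'n) \<Rightarrow> (nat \<Rightarrow> nat \<Rightarrow> nat \<Rightarrow> real^'n \<Rightarrow> real^'d)
    \<Rightarrow> (real^'n \<Rightarrow> ereal) \<Rightarrow> nat \<Rightarrow> nat \<Rightarrow> nat \<Rightarrow> real^'n \<Rightarrow> ereal" where
  "Jtail A B W h N xt pol Qprev i t 0 v = Qprev v"
| "Jtail A B W h N xt pol Qprev i t (Suc m) v =
     (let k = N - Suc m; u = pol i t (t + k) v;
          V = {q. q extreme_point_of reach A B W xt pol i t (Suc k)}
      in ereal (h v u) +
         (INF g\<in>{g. (\<forall>q\<in>V. 0 \<le> g q) \<and> (\<Sum>q\<in>V. g q *\<^sub>R q) = A *v v + B *v u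
                    \<and> (\<Sum>q\<in>V. g q) = 1}.
            (\<Sum>q\<in>V. ereal (g q) * Jtail A B W h N xt pol Qprev i t m q)))"

primrec Dset :: "real^'n^'n \<Rightarrow> real^'d^'n \<Rightarrow> (real^'n) set \<Rightarrow> (real^'n \<Rightarrow> real^'d \<Rightarrow> real)
    \<Rightarrow> nat \<Rightarrow> real^'n^'d \<Rightarrow> (real^'n) set
    \<Rightarrow> (nat \<Rightarrow> nat) \<Rightarrow> (nat \<Rightarrow> nat \<Rightarrow> real^'n) \<Rightarrow> (nat \<Rightarrow> nat \<Rightarrow> nat \<Rightarrow> real^'n \<Rightarrow> real^'d)
    \<Rightarrow> nat \<Rightarrow> ('n, 'd) col set" where
  "Dset A B W h N K Ob T xt pol 0 = {(v, K *v v, 0) | v. v extreme_point_of Ob}"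
| "Dset A B W h N K Ob T xt pol (Suc i) =
     Dset A B W h N K Ob T xt pol i \<union>
     {(v, pol (Suc i) t (t + k) v,
       Jtail A B W h N xt pol (Qof (Dset A B W h N K Ob T xt pol i)) (Suc i) t (N - k) v)
      | t k v. t \<le> T (Suc i) \<and> k < N \<and> v extreme_point_of reach A B W xt pol (Suc i) t k}"

text \<open>LMPC problem (time-invariant; relative prediction index k = 0..N-1).
  M k s, g k: disturbance-feedback parameters (used for k < Nt);
  lam k x: multiplier policy (used for k >= Nt).\<close>
definition lmpc_in :: "('n, 'd) col set \<Rightarrow> nat \<Rightarrow> (nat \<Rightarrow> nat \<Rightarrow> real^'n^'d) \<Rightarrow> (nat \<Rightarrow> real^'d)
    \<Rightarrow> (nat \<Rightarrow> real^'n \<Rightarrow> ('n, 'd) col \<Rightarrow> real) \<Rightarrow> (nat \<Rightarrow> real^'n) \<Rightarrow> real^'n \<Rightarrow> nat \<Rightarrow> real^'d" where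
  "lmpc_in D Nt M g lam ws x k =
     (if k < Nt then (\<Sum>s<k. M k s *v ws s) + g k
      else (\<Sum>c\<in>D. lam k x c *\<^sub>R fst (snd c)))"

fun pstate :: "real^'n^'n \<Rightarrow> real^'d^'n \<Rightarrow> ('n, 'd) col set \<Rightarrow> nat \<Rightarrow> (nat \<Rightarrow> nat \<Rightarrow> real^'n^'d)
    \<Rightarrow> (nat \<Rightarrow> real^'d) \<Rightarrow> (nat \<Rightarrow> real^'n \<Rightarrow> ('n, 'd) col \<Rightarrow> real) \<Rightarrow> (nat \<Rightarrow> real^'n)
    \<Rightarrow> real^'n \<Rightarrow> nat \<Rightarrow> real^'n" where
  "pstate A B D Nt M g lam ws x 0 = x"
| "pstate A B D Nt M g lam ws x (Suc k) =
     A *v pstate A B D Nt M g lam ws x k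
     + B *v lmpc_in D Nt M g lam ws (pstate A B D Nt M g lam ws x k) k + ws k"

definition lmpc_feasible :: "real^'n^'n \<Rightarrow> real^'d^'n \<Rightarrow> (real^'n) set \<Rightarrow> (real^'n) set
    \<Rightarrow> (real^'d) set \<Rightarrow> ('n, 'd) col set \<Rightarrow> (real^'n) set \<Rightarrow> nat \<Rightarrow> real^'n \<Rightarrow> nat
    \<Rightarrow> (nat \<Rightarrow> nat \<Rightarrow> real^'n^'d) \<Rightarrow> (nat \<Rightarrow> real^'d) \<Rightarrow> (nat \<Rightarrow> real^'n \<Rightarrow> ('n, 'd) col \<Rightarrow> real)
    \<Rightarrow> bool" where
  "lmpc_feasible A B W X U D CS N x Nt M g lam \<longleftrightarrow> Nt \<le> N \<and>
     (\<forall>ws. (\<forall>k<N. ws k \<in> W) \<longrightarrow>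
        (\<forall>k<N. pstate A B D Nt M g lam ws x k \<in> X
               \<and> lmpc_in D Nt M g lam ws (pstate A B D Nt M g lam ws x k) k \<in> U
               \<and> (Nt \<le> k \<longrightarrow> lam k (pstate A B D Nt M g lam ws x k)
                                   \<in> Lam D (pstate A B D Nt M g lam ws x k)))
        \<and> pstate A B D Nt M g lam ws x N \<in> CS)"

definition lmpc_cost :: "real^'n^'n \<Rightarrow> real^'d^'n \<Rightarrow> (real^'n \<Rightarrow> real^'d \<Rightarrow> real)
    \<Rightarrow> ('n, 'd) col set \<Rightarrow> nat \<Rightarrow> real^'n \<Rightarrow> nat
    \<Rightarrow> (nat \<Rightarrow> nat \<Rightarrow> real^'n^'d) \<Rightarrow> (nat \<Rightarrow> real^'d) \<Rightarrow> (nat \<Rightarrow> real^'n \<Rightarrow> ('n, 'd) col \<Rightarrow> real)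
    \<Rightarrow> ereal" where
  "lmpc_cost A B h D N x Nt M g lam =
     (\<Sum>k<N. ereal (h (pstate A B D Nt M g lam (\<lambda>_. 0) x k)
                      (lmpc_in D Nt M g lam (\<lambda>_. 0) (pstate A B D Nt M g lam (\<lambda>_. 0) x k) k)))
     + Qof D (pstate A B D Nt M g lam (\<lambda>_. 0) x N)"

text \<open>Optimal value C^{LMPC}(x, Nt) (+oo if infeasible).\<close>
definition lmpc_value :: "real^'n^'n \<Rightarrow> real^'d^'n \<Rightarrow> (real^'n) set \<Rightarrow> (real^'n) set
    \<Rightarrow> (real^'d) set \<Rightarrow> (real^'n \<Rightarrow> real^'d \<Rightarrow> real) \<Rightarrow> ('n, 'd) col set \<Rightarrow> (real^'n) set
    \<Rightarrow> nat \<Rightarrow> real^'n \<Rightarrow> nat \<Rightarrow> ereal" where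
  "lmpc_value A B W X U h D CS N x Nt =
     (INF p\<in>{(M, g, lam). lmpc_feasible A B W X U D CS N x Nt M g lam}.
        lmpc_cost A B h D N x Nt (fst p) (fst (snd p)) (snd (snd p)))"

end

theory Submission
  imports Defs
begin


lemma poly_hull:
  fixes P :: "'a::euclidean_space set"
  assumes "polytope P"
  shows "finite {v. v extreme_point_of P} \<and> P = convex hull {v. v extreme_point_of P}"
proof
  show "finite {v. v extreme_point_of P}"
    using assms finite_polyhedron_extreme_points polytope_eq_bounded_polyhedron by blast
  show "P = convex hull {v. v extreme_point_of P}"
    using assms Krein_Milman_Minkowski polytope_imp_compact polytope_imp_convex by blast
qed

lemma lam_exists:
  fixes D :: "('n::finite, 'd::finite) col set"
  assumes "finite D" "y \<in> convex hull (fst ` D)"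
  shows "\<exists>l. l \<in> Lam D y"
proof -
  let ?S = "{y. \<exists>l. l \<in> Lam D y}"
  have sub: "fst ` D \<subseteq> ?S"
  proof
    fix y assume "y \<in> fst ` D"
    then obtain c where c: "c \<in> D" "y = fst c" by auto
    have "(\<lambda>c'. if c' = c then 1 else 0) \<in> Lam D y"
    proof -
      have "(\<Sum>c'\<in>D. (if c' = c then 1 else 0) *\<^sub>R fst c') = (\<Sum>c'\<in>D. if c' = c then fst c' else 0)"
        by (rule sum.cong) auto
      also have "\<dots> = fst c" using c assms(1) by (simp add: sum.delta')
      finally show ?thesis using c assms(1) unfolding Lam_def by (simp add: sum.delta')
    qed
    then show "y \<in> ?S" by blast
  qed
  have cvx: "convex ?S"
  proof (rule convexI)
    fix x z :: "real^'n" and u v :: real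
    assume x: "x \<in> ?S" and z: "z \<in> ?S" and "0 \<le> u" "0 \<le> v" "u + v = 1"
    then have uv: "0 \<le> u \<and> 0 \<le> v \<and> u + v = 1" by simp
    from x z obtain l1 l2 where l1: "l1 \<in> Lam D x" and l2: "l2 \<in> Lam D z" by blast
    have n1: "\<forall>c\<in>D. 0 \<le> l1 c" and s1: "(\<Sum>c\<in>D. l1 c *\<^sub>R fst c) = x" and t1: "(\<Sum>c\<in>D. l1 c) = 1"
      using l1 unfolding Lam_def by auto
    have n2: "\<forall>c\<in>D. 0 \<le> l2 c" and s2: "(\<Sum>c\<in>D. l2 c *\<^sub>R fst c) = z" and t2: "(\<Sum>c\<in>D. l2 c) = 1"
      using l2 unfolding Lam_def by auto
    have "\<forall>c\<in>D. 0 \<le> u * l1 c + v * l2 c" using n1 n2 uv by simp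
    moreover have "(\<Sum>c\<in>D. (u * l1 c + v * l2 c) *\<^sub>R fst c) = u *\<^sub>R x + v *\<^sub>R z"
      unfolding s1[symmetric] s2[symmetric]
      by (simp add: scaleR_add_left sum.distrib scaleR_sum_right)
    moreover have "(\<Sum>c\<in>D. u * l1 c + v * l2 c) = 1"
      using t1 t2 uv by (simp add: sum.distrib sum_distrib_left[symmetric])
    ultimately have "(\<lambda>c. u * l1 c + v * l2 c) \<in> Lam D (u *\<^sub>R x + v *\<^sub>R z)"
      unfolding Lam_def by blast
    then show "u *\<^sub>R x + v *\<^sub>R z \<in> ?S" by blast
  qed
  have "convex hull (fst ` D) \<subseteq> ?S" using sub cvx by (rule hull_minimal)
  then show ?thesis using assms(2) by blast
qed

lemma Qof_fin:
  fixes D :: "('n::finite, 'd::finite) col set"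
  assumes "finite D" "\<forall>c\<in>D. snd (snd c) < \<infinity>" "l \<in> Lam D y"
  shows "Qof D y < \<infinity>"
proof -
  have nn: "\<forall>c\<in>D. 0 \<le> l c" using assms(3) unfolding Lam_def by blast
  have "\<forall>c\<in>D. ereal (l c) * snd (snd c) \<noteq> \<infinity>"
  proof
    fix c assume c: "c \<in> D"
    have "snd (snd c) \<noteq> \<infinity>" using assms(2) c by auto
    show "ereal (l c) * snd (snd c) \<noteq> \<infinity>"
    proof -
      have "\<not> l c < 0" using nn c by force
      then show ?thesis using \<open>snd (snd c) \<noteq> \<infinity>\<close> by (simp add: ereal_mult_eq_PInfty)
    qed
  qed
  then have s: "(\<Sum>c\<in>D. ereal (l c) * snd (snd c)) \<noteq> \<infinity>"
    unfolding sum_Pinfty by blast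
  have "Qof D y \<le> (\<Sum>c\<in>D. ereal (l c) * snd (snd c))"
    unfolding Qof_def using assms(3) by (rule INF_lower)
  moreover have "(\<Sum>c\<in>D. ereal (l c) * snd (snd c)) < \<infinity>"
    using s by (cases "(\<Sum>c\<in>D. ereal (l c) * snd (snd c))") auto
  ultimately show ?thesis by (rule order.strict_trans1)
qed



lemma wsum_fin:
  fixes g :: "'a \<Rightarrow> real" and f :: "'a \<Rightarrow> ereal"
  assumes "\<forall>q\<in>S. 0 \<le> g q" "\<forall>q\<in>S. f q < \<infinity>"
  shows "(\<Sum>q\<in>S. ereal (g q) * f q) < \<infinity>"
proof -
  have "\<forall>q\<in>S. ereal (g q) * f q \<noteq> \<infinity>"
  proof
    fix q assume q: "q \<in> S"
    have "f q \<noteq> \<infinity>" using assms(2) q by auto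
    moreover have "\<not> g q < 0" using assms(1) q by force
    ultimately show "ereal (g q) * f q \<noteq> \<infinity>" by (simp add: ereal_mult_eq_PInfty)
  qed
  then have s: "(\<Sum>q\<in>S. ereal (g q) * f q) \<noteq> \<infinity>"
    unfolding sum_Pinfty by blast
  then show ?thesis by (cases "(\<Sum>q\<in>S. ereal (g q) * f q)") auto
qed

lemma Jtail_fin:
  fixes A :: "real^'n^'n" and B :: "real^'d^'n"
  assumes W0: "0 \<in> W"
    and poly: "\<forall>k\<le>N. polytope (reach A B W xt pol i t k)"
    and Q: "\<forall>v\<in>reach A B W xt pol i t N. Qprev v < \<infinity>"
  shows "m \<le> N \<Longrightarrow> v \<in> reach A B W xt pol i t (N - m) \<Longrightarrow> Jtail A B W h N xt pol Qprev i t m v < \<infinity>"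
proof (induction m arbitrary: v)
  case 0 then show ?case using Q by simp
next
  case (Suc m)
  let ?R = "reach A B W xt pol i t"
  define k where "k = N - Suc m"
  define u where "u = pol i t (t + k) v"
  define V where "V = {q. q extreme_point_of ?R (Suc k)}"
  have Sk: "Suc k = N - m" using Suc.prems k_def by simp
  have vk: "v \<in> ?R k" using Suc.prems k_def by simp
  have "A *v v + B *v u + 0 \<in> ?R (Suc k)" unfolding reach.simps u_def using vk W0 by blast
  then have mem: "A *v v + B *v u \<in> ?R (Suc k)" by simp
  have "polytope (?R (Suc k))" using poly Sk by simp
  then have fV: "finite V" and hV: "?R (Suc k) = convex hull V" using poly_hull unfolding V_def by blast+
  obtain g where g: "\<forall>q\<in>V. 0 \<le> g q" "sum g V = 1" "(\<Sum>q\<in>V. g q *\<^sub>R q) = A *v v + B *v u"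
    using mem unfolding hV convex_hull_finite[OF fV] by blast
  have IH: "\<forall>q\<in>V. Jtail A B W h N xt pol Qprev i t m q < \<infinity>"
  proof
    fix q assume "q \<in> V"
    then have "q \<in> ?R (N - m)" unfolding V_def Sk[symmetric] by (simp add: extreme_point_of_def)
    then show "Jtail A B W h N xt pol Qprev i t m q < \<infinity>" using Suc.IH Suc.prems by simp
  qed
  let ?G = "{g. (\<forall>q\<in>V. 0 \<le> g q) \<and> (\<Sum>q\<in>V. g q *\<^sub>R q) = A *v v + B *v u \<and> (\<Sum>q\<in>V. g q) = 1}"
  have eq: "Jtail A B W h N xt pol Qprev i t (Suc m) v = ereal (h v u) +
      (INF g\<in>?G. (\<Sum>q\<in>V. ereal (g q) * Jtail A B W h N xt pol Qprev i t m q))"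
    unfolding u_def V_def k_def by (simp only: Jtail.simps Let_def)
  have "g \<in> ?G" using g by blast
  then have "(INF g\<in>?G. (\<Sum>q\<in>V. ereal (g q) * Jtail A B W h N xt pol Qprev i t m q))
      \<le> (\<Sum>q\<in>V. ereal (g q) * Jtail A B W h N xt pol Qprev i t m q)" by (rule INF_lower)
  also have "\<dots> < \<infinity>" using wsum_fin g(1) IH by blast
  finally have "(INF g\<in>?G. (\<Sum>q\<in>V. ereal (g q) * Jtail A B W h N xt pol Qprev i t m q)) < \<infinity>" .
  then show ?case unfolding eq by simp
qed



lemma data_props:
  fixes A :: "real^'n^'n" and B :: "real^'d^'n" and K :: "real^'n^'d"
    and W Ob X :: "(real^'n) set" and U :: "(real^'d) set"
    and h :: "real^'n \<Rightarrow> real^'d \<Rightarrow> real" and N j :: nat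
    and T :: "nat \<Rightarrow> nat" and xt :: "nat \<Rightarrow> nat \<Rightarrow> real^'n"
    and pol :: "nat \<Rightarrow> nat \<Rightarrow> nat \<Rightarrow> real^'n \<Rightarrow> real^'d"
  assumes W0: "0 \<in> W" and Xc: "convex X" and Xb: "bounded X" and Uc: "convex U"
    and Ob: "polyhedron Ob" "Ob \<subseteq> X" "(\<lambda>x. K *v x) ` Ob \<subseteq> U"
           "\<forall>x\<in>Ob. \<forall>w\<in>W. (A + B ** K) *v x + w \<in> Ob"
    and iter_constr: "\<forall>i. 1 \<le> i \<and> i < j \<longrightarrow> (\<forall>t\<le>T i. \<forall>k<N.
        \<forall>x\<in>reach A B W xt pol i t k. x \<in> X \<and> pol i t (t + k) x \<in> U)"
    and iter_term: "\<forall>i. 1 \<le> i \<and> i < j \<longrightarrow> (\<forall>t\<le>T i.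
        reach A B W xt pol i t N \<subseteq> CSset A B W N Ob T xt pol (i - 1))"
    and iter_poly: "\<forall>i. 1 \<le> i \<and> i < j \<longrightarrow> (\<forall>t\<le>T i. \<forall>k\<le>N.
        polytope (reach A B W xt pol i t k))"
  shows "i < j \<Longrightarrow> finite (Dset A B W h N K Ob T xt pol i)
     \<and> CSset A B W N Ob T xt pol i = convex hull (fst ` Dset A B W h N K Ob T xt pol i)
     \<and> CSset A B W N Ob T xt pol i \<subseteq> X
     \<and> (\<forall>c\<in>Dset A B W h N K Ob T xt pol i. fst (snd c) \<in> U \<and> snd (snd c) < \<infinity>
          \<and> (\<forall>w\<in>W. A *v fst c + B *v fst (snd c) + w \<in> CSset A B W N Ob T xt pol i))"
proof (induction i)
  case 0
  let ?E = "{v. v extreme_point_of Ob}"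
  have D0: "Dset A B W h N K Ob T xt pol 0 = (\<lambda>v. (v, K *v v, 0)) ` ?E" by auto
  have cOb: "compact Ob" using Ob(1,2) Xb polyhedron_imp_closed bounded_subset compact_eq_bounded_closed by blast
  have hOb: "Ob = convex hull ?E"
    using Krein_Milman_Minkowski cOb Ob(1) polyhedron_imp_convex by blast
  have fE: "finite ?E" using finite_polyhedron_extreme_points Ob(1) by blast
  have fst0: "fst ` Dset A B W h N K Ob T xt pol 0 = ?E" unfolding D0 by force
  have cols: "\<forall>c\<in>Dset A B W h N K Ob T xt pol 0. fst (snd c) \<in> U \<and> snd (snd c) < \<infinity>
          \<and> (\<forall>w\<in>W. A *v fst c + B *v fst (snd c) + w \<in> Ob)"
  proof
    fix c assume "c \<in> Dset A B W h N K Ob T xt pol 0"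
    then obtain v where v: "v \<in> Ob" "c = (v, K *v v, 0)" unfolding D0 by (auto simp: extreme_point_of_def)
    have "\<forall>w\<in>W. A *v v + B *v (K *v v) + w \<in> Ob"
      using Ob(4) v(1) by (simp add: matrix_vector_mult_add_rdistrib matrix_vector_mul_assoc[symmetric])
    then show "fst (snd c) \<in> U \<and> snd (snd c) < \<infinity> \<and> (\<forall>w\<in>W. A *v fst c + B *v fst (snd c) + w \<in> Ob)"
      using v Ob(3) by auto
  qed
  show ?case using D0 fE hOb fst0 cols Ob(2) by simp
next
  case (Suc i)
  let ?R = "reach A B W xt pol (Suc i)"
  let ?Ti = "T (Suc i)"
  let ?Di = "Dset A B W h N K Ob T xt pol i"
  let ?CSi = "CSset A B W N Ob T xt pol i"
  let ?CS = "CSset A B W N Ob T xt pol (Suc i)"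
  let ?J = "Jtail A B W h N xt pol (Qof ?Di) (Suc i)"
  let ?S = "{(t, k, v). t \<le> ?Ti \<and> k < N \<and> v extreme_point_of ?R t k}"
  let ?New = "(\<lambda>(t, k, v). (v, pol (Suc i) t (t + k) v, ?J t (N - k) v)) ` ?S"
  let ?E = "{v. \<exists>t k. t \<le> ?Ti \<and> k < N \<and> v extreme_point_of ?R t k}"
  let ?UR = "\<Union>t\<in>{..?Ti}. \<Union>k\<in>{..N}. ?R t k"
  have IH: "finite ?Di" "?CSi = convex hull (fst ` ?Di)" "?CSi \<subseteq> X"
    "\<forall>c\<in>?Di. fst (snd c) \<in> U \<and> snd (snd c) < \<infinity> \<and> (\<forall>w\<in>W. A *v fst c + B *v fst (snd c) + w \<in> ?CSi)"
    using Suc by auto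
  have ij: "1 \<le> Suc i \<and> Suc i < j" using Suc.prems by simp
  have constr: "\<forall>t\<le>?Ti. \<forall>k<N. \<forall>x\<in>?R t k. x \<in> X \<and> pol (Suc i) t (t + k) x \<in> U"
    using iter_constr ij by blast
  have trm: "\<forall>t\<le>?Ti. ?R t N \<subseteq> ?CSi" using iter_term ij by fastforce
  have poly: "\<forall>t\<le>?Ti. \<forall>k\<le>N. polytope (?R t k)" using iter_poly ij by blast
  have NewEq: "{(v, pol (Suc i) t (t + k) v, ?J t (N - k) v) | t k v. t \<le> ?Ti \<and> k < N \<and> v extreme_point_of ?R t k} = ?New"
  proof (rule set_eqI, rule iffI)
    fix x assume "x \<in> {(v, pol (Suc i) t (t + k) v, ?J t (N - k) v) | t k v. t \<le> ?Ti \<and> k < N \<and> v extreme_point_of ?R t k}"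
    then obtain t k v where "x = (v, pol (Suc i) t (t + k) v, ?J t (N - k) v)" "(t, k, v) \<in> ?S" by blast
    then show "x \<in> ?New" by (intro image_eqI[where x="(t, k, v)"]) auto
  next
    fix x assume "x \<in> ?New"
    then show "x \<in> {(v, pol (Suc i) t (t + k) v, ?J t (N - k) v) | t k v. t \<le> ?Ti \<and> k < N \<and> v extreme_point_of ?R t k}"
      by auto
  qed
  have DS: "Dset A B W h N K Ob T xt pol (Suc i) = ?Di \<union> ?New" unfolding NewEq[symmetric] by simp
  have CSdef: "?CS = convex hull (?UR \<union> ?CSi)" by simp
  have fS: "finite ?S"
  proof (rule finite_subset)
    show "?S \<subseteq> Sigma {..?Ti} (\<lambda>t. Sigma {..<N} (\<lambda>k. {v. v extreme_point_of ?R t k}))" by auto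
    show "finite (Sigma {..?Ti} (\<lambda>t. Sigma {..<N} (\<lambda>k. {v. v extreme_point_of ?R t k})))"
    proof (intro finite_SigmaI)
      fix t k assume "t \<in> {..?Ti}" "k \<in> {..<N}"
      then have "polytope (?R t k)" using poly by simp
      then show "finite {v. v extreme_point_of ?R t k}" using poly_hull by blast
    qed auto
  qed
  have fD: "finite (Dset A B W h N K Ob T xt pol (Suc i))" unfolding DS using fS IH(1) by blast
  have fstN: "fst ` ?New = ?E" by force
  have CSi_sub: "?CSi \<subseteq> ?CS" unfolding CSdef using hull_subset[of "?UR \<union> ?CSi" convex] by blast
  have UR_sub: "?UR \<subseteq> ?CS" unfolding CSdef using hull_subset[of "?UR \<union> ?CSi" convex] by blast
  have hull_eq: "?CS = convex hull (fst ` Dset A B W h N K Ob T xt pol (Suc i))"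
  proof
    let ?H = "convex hull (fst ` Dset A B W h N K Ob T xt pol (Suc i))"
    have H: "?H = convex hull (fst ` ?Di \<union> ?E)" unfolding DS image_Un fstN ..
    have s1: "?CSi \<subseteq> ?H" unfolding H IH(2) by (rule hull_mono) blast
    have s2: "?UR \<subseteq> ?H"
    proof
      fix x assume "x \<in> ?UR"
      then obtain t k where tk: "t \<le> ?Ti" "k \<le> N" "x \<in> ?R t k" by blast
      show "x \<in> ?H"
      proof (cases "k = N")
        case True then show ?thesis using tk trm s1 by blast
      next
        case False
        then have "k < N" using tk by simp
        have "?R t k = convex hull {v. v extreme_point_of ?R t k}" using poly tk poly_hull by blast
        also have "\<dots> \<subseteq> ?H" unfolding H by (rule hull_mono) (use \<open>k < N\<close> tk in blast)
        finally show ?thesis using tk by blast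
      qed
    qed
    show "?CS \<subseteq> ?H" unfolding CSdef using s1 s2 by (intro hull_minimal) auto
    have "fst ` ?Di \<subseteq> ?CSi" using IH(2) hull_subset[of "fst ` ?Di" convex] by simp
    then have a1: "fst ` ?Di \<subseteq> ?CS" using CSi_sub by (rule order.trans)
    have a2: "?E \<subseteq> ?CS"
    proof
      fix v assume "v \<in> ?E"
      then obtain t k where tk: "t \<le> ?Ti" "k < N" "v extreme_point_of ?R t k" by blast
      then have "v \<in> ?R t k" by (simp add: extreme_point_of_def)
      then have "v \<in> ?UR" using tk by (intro UN_I[of t] UN_I[of k]) auto
      then show "v \<in> ?CS" using UR_sub by (rule subsetD[rotated])
    qed
    have cv: "convex ?CS" unfolding CSdef by (rule convex_convex_hull)
    show "?H \<subseteq> ?CS" unfolding H using a1 a2 cv by (intro hull_minimal Un_least)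
  qed
  have CSX: "?CS \<subseteq> X"
    unfolding CSdef
  proof (intro hull_minimal Xc Un_least)
    show "?CSi \<subseteq> X" by (rule IH(3))
    show "?UR \<subseteq> X"
    proof
      fix x assume "x \<in> ?UR"
      then obtain t k where tk: "t \<le> ?Ti" "k \<le> N" "x \<in> ?R t k" by blast
      show "x \<in> X"
      proof (cases "k = N")
        case True then show ?thesis using tk trm IH(3) by blast
      next
        case False
        then have "k < N" using tk by simp
        then show ?thesis using tk constr by blast
      qed
    qed
  qed
  have Qfin: "\<forall>t\<le>?Ti. \<forall>v\<in>?R t N. Qof ?Di v < \<infinity>"
  proof (intro allI impI ballI)
    fix t v assume "t \<le> ?Ti" "v \<in> ?R t N"
    then have "v \<in> convex hull (fst ` ?Di)" using trm IH(2) by blast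
    then obtain l where "l \<in> Lam ?Di v" using lam_exists IH(1) by blast
    then show "Qof ?Di v < \<infinity>" using Qof_fin IH(1) IH(4) by blast
  qed
  have colsN: "\<forall>c\<in>?New. fst (snd c) \<in> U \<and> snd (snd c) < \<infinity>
          \<and> (\<forall>w\<in>W. A *v fst c + B *v fst (snd c) + w \<in> ?CS)"
  proof
    fix c assume "c \<in> ?New"
    then obtain t k v where tkv: "t \<le> ?Ti" "k < N" "v extreme_point_of ?R t k"
      "c = (v, pol (Suc i) t (t + k) v, ?J t (N - k) v)" by auto
    have v: "v \<in> ?R t k" using tkv(3) by (simp add: extreme_point_of_def)
    have u: "pol (Suc i) t (t + k) v \<in> U" using constr tkv v by blast
    have "\<forall>w\<in>W. A *v v + B *v pol (Suc i) t (t + k) v + w \<in> ?R t (Suc k)"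
      unfolding reach.simps using v by blast
    moreover have "?R t (Suc k) \<subseteq> ?UR" using tkv by (intro subsetI UN_I[of t] UN_I[of "Suc k"]) auto
    ultimately have "\<forall>w\<in>W. A *v v + B *v pol (Suc i) t (t + k) v + w \<in> ?UR" by blast
    moreover note UR_sub
    ultimately have w: "\<forall>w\<in>W. A *v v + B *v pol (Suc i) t (t + k) v + w \<in> ?CS" by blast
    have "?J t (N - k) v < \<infinity>"
    proof (rule Jtail_fin[OF W0])
      show "\<forall>k\<le>N. polytope (?R t k)" using poly tkv by blast
      show "\<forall>v\<in>?R t N. Qof ?Di v < \<infinity>" using Qfin tkv by blast
      show "N - k \<le> N" by simp
      show "v \<in> ?R t (N - (N - k))" using v tkv by simp
    qed
    then show "fst (snd c) \<in> U \<and> snd (snd c) < \<infinity> \<and> (\<forall>w\<in>W. A *v fst c + B *v fst (snd c) + w \<in> ?CS)"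
      using tkv u w by simp
  qed
  have colsO: "\<forall>c\<in>?Di. fst (snd c) \<in> U \<and> snd (snd c) < \<infinity>
          \<and> (\<forall>w\<in>W. A *v fst c + B *v fst (snd c) + w \<in> ?CS)"
    using IH(4) CSi_sub by blast
  have "\<forall>c\<in>?Di \<union> ?New. fst (snd c) \<in> U \<and> snd (snd c) < \<infinity>
          \<and> (\<forall>w\<in>W. A *v fst c + B *v fst (snd c) + w \<in> ?CS)"
    using colsN colsO by (simp only: ball_Un)
  then show ?case using fD hull_eq CSX unfolding DS by (intro conjI)
qed



lemma Amul_sum:
  fixes A :: "real^'n^'m"
  shows "A *v (\<Sum>c\<in>D. l c *\<^sub>R v c) = (\<Sum>c\<in>D. l c *\<^sub>R (A *v v c))"
proof -
  have lin: "linear (\<lambda>x. A *v x)" by simp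
  show ?thesis by (simp add: linear_sum[OF lin] linear_scale[OF lin] o_def)
qed

lemma value_fin:
  fixes A :: "real^'n^'n" and B :: "real^'d^'n" and D :: "('n, 'd) col set"
  assumes feas: "lmpc_feasible A B W X U D CS N y Nt M g lam"
    and W0: "0 \<in> W" and fD: "finite D" and hull: "CS \<subseteq> convex hull (fst ` D)"
    and cols: "\<forall>c\<in>D. snd (snd c) < \<infinity>"
  shows "lmpc_value A B W X U h D CS N y Nt < \<infinity>"
proof -
  have "pstate A B D Nt M g lam (\<lambda>_. 0) y N \<in> CS"
    using feas W0 unfolding lmpc_feasible_def by auto
  then obtain l where "l \<in> Lam D (pstate A B D Nt M g lam (\<lambda>_. 0) y N)"
    using lam_exists fD hull by blast
  then have q: "Qof D (pstate A B D Nt M g lam (\<lambda>_. 0) y N) < \<infinity>" using Qof_fin fD cols by blast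
  let ?S = "(\<Sum>k<N. ereal (h (pstate A B D Nt M g lam (\<lambda>_. 0) y k)
                      (lmpc_in D Nt M g lam (\<lambda>_. 0) (pstate A B D Nt M g lam (\<lambda>_. 0) y k) k)))"
  have "?S \<noteq> \<infinity>" unfolding sum_Pinfty by simp
  moreover have "Qof D (pstate A B D Nt M g lam (\<lambda>_. 0) y N) \<noteq> \<infinity>" using q by auto
  ultimately have ne: "lmpc_cost A B h D N y Nt M g lam \<noteq> \<infinity>" unfolding lmpc_cost_def by simp
  have "lmpc_cost A B h D N y Nt M g lam < \<infinity>"
    using ne by (cases "lmpc_cost A B h D N y Nt M g lam") auto
  moreover have "lmpc_value A B W X U h D CS N y Nt \<le> lmpc_cost A B h D N y Nt M g lam"
    unfolding lmpc_value_def
    using INF_lower[of "(M, g, lam)" "{(M, g, lam). lmpc_feasible A B W X U D CS N y Nt M g lam}"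
        "\<lambda>p. lmpc_cost A B h D N y Nt (fst p) (fst (snd p)) (snd (snd p))"] feas by simp
  ultimately show ?thesis by (rule order.strict_trans1[rotated])
qed



lemma shift_feasible:
  fixes A :: "real^'n^'n" and B :: "real^'d^'n" and D :: "('n, 'd) col set"
  assumes feas: "lmpc_feasible A B W X U D CS N x Nt M g lam"
    and N1: "1 \<le> N" and fD: "finite D" and hull: "CS = convex hull (fst ` D)"
    and CSX: "CS \<subseteq> X" and Uc: "convex U"
    and cols: "\<forall>c\<in>D. fst (snd c) \<in> U \<and> (\<forall>w\<in>W. A *v fst c + B *v fst (snd c) + w \<in> CS)"
    and w0: "w0 \<in> W"
  shows "\<exists>M' g' lam'. lmpc_feasible A B W X U D CS N
            (A *v x + B *v lmpc_in D Nt M g lam (\<lambda>_. 0) x 0 + w0) (Nt - 1) M' g' lam'"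
proof -
  define x' where "x' = A *v x + B *v lmpc_in D Nt M g lam (\<lambda>_. 0) x 0 + w0"
  define M' where "M' = (\<lambda>k s. M (Suc k) (Suc s))"
  define g' where "g' = (\<lambda>k. g (Suc k) + M (Suc k) 0 *v w0)"
  define lam' where "lam' = (\<lambda>k y. if k = N - 1 then (SOME l. l \<in> Lam D y) else lam (Suc k) y)"
  have NtN: "Nt \<le> N" using feas unfolding lmpc_feasible_def by simp
  have inp: "lmpc_in D (Nt - 1) M' g' lam' ws' y k = lmpc_in D Nt M g lam (case_nat w0 ws') y (Suc k)"
    if "k < N - 1" for ws' y k
  proof (cases "k < Nt - 1")
    case True
    then have "Suc k < Nt" by simp
    have sh: "(\<Sum>s<Suc k. M (Suc k) s *v case_nat w0 ws' s) = M (Suc k) 0 *v w0 + (\<Sum>s<k. M (Suc k) (Suc s) *v ws' s)"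
      by (subst sum.lessThan_Suc_shift) simp
    show ?thesis using True \<open>Suc k < Nt\<close> unfolding lmpc_in_def M'_def g'_def
      by (simp only: if_True sh) (simp add: algebra_simps)
  next
    case False
    then have "\<not> Suc k < Nt" by simp
    then show ?thesis using False that by (simp add: lmpc_in_def lam'_def)
  qed
  have in0: "lmpc_in D Nt M g lam ws x 0 = lmpc_in D Nt M g lam (\<lambda>_. 0) x 0" for ws
    by (simp add: lmpc_in_def)
  have st: "pstate A B D (Nt - 1) M' g' lam' ws' x' k = pstate A B D Nt M g lam (case_nat w0 ws') x (Suc k)"
    if "k \<le> N - 1" for ws' k
    using that
  proof (induction k)
    case 0 then show ?case unfolding x'_def by (simp only: pstate.simps in0[of "case_nat w0 ws'"]) simp
  next
    case (Suc k)
    then have "k < N - 1" by simp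
    have IH: "pstate A B D (Nt - 1) M' g' lam' ws' x' k = pstate A B D Nt M g lam (case_nat w0 ws') x (Suc k)"
      using Suc by simp
    show ?case by (simp only: pstate.simps(2) IH inp[OF \<open>k < N - 1\<close>] nat.case(2))
  qed
  have "lmpc_feasible A B W X U D CS N x' (Nt - 1) M' g' lam'"
    unfolding lmpc_feasible_def
  proof (rule conjI; (intro allI impI)?; (rule conjI)?)
    show "Nt - 1 \<le> N" using NtN by simp
    fix ws' assume ws': "\<forall>k<N. ws' k \<in> W"
    let ?ws = "case_nat w0 ws'"
    have wsW: "\<forall>k<N. ?ws k \<in> W" using ws' w0 by (auto split: nat.splits)
    have F: "\<forall>k<N. pstate A B D Nt M g lam ?ws x k \<in> X
               \<and> lmpc_in D Nt M g lam ?ws (pstate A B D Nt M g lam ?ws x k) k \<in> U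
               \<and> (Nt \<le> k \<longrightarrow> lam k (pstate A B D Nt M g lam ?ws x k)
                                   \<in> Lam D (pstate A B D Nt M g lam ?ws x k))"
      and FT: "pstate A B D Nt M g lam ?ws x N \<in> CS"
      using feas wsW unfolding lmpc_feasible_def by blast+
    let ?y = "pstate A B D Nt M g lam ?ws x N"
    have yN: "pstate A B D (Nt - 1) M' g' lam' ws' x' (N - 1) = ?y" using st[of "N - 1" ws'] N1 by simp
    obtain l0 where "l0 \<in> Lam D ?y" using lam_exists fD hull FT by blast
    then have lS: "(SOME l. l \<in> Lam D ?y) \<in> Lam D ?y" by (rule someI[where P="\<lambda>l. l \<in> Lam D ?y"])
    define l where "l = (SOME l. l \<in> Lam D ?y)"
    have l: "\<forall>c\<in>D. 0 \<le> l c" "(\<Sum>c\<in>D. l c *\<^sub>R fst c) = ?y" "(\<Sum>c\<in>D. l c) = 1"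
      using lS unfolding l_def Lam_def by auto
    have inN: "lmpc_in D (Nt - 1) M' g' lam' ws' ?y (N - 1) = (\<Sum>c\<in>D. l c *\<^sub>R fst (snd c))"
      using NtN by (simp add: lmpc_in_def lam'_def l_def)
    have uN: "(\<Sum>c\<in>D. l c *\<^sub>R fst (snd c)) \<in> U"
      by (rule convex_sum[OF fD Uc l(3)]) (use l(1) cols in auto)
    show "\<forall>k<N. pstate A B D (Nt - 1) M' g' lam' ws' x' k \<in> X
               \<and> lmpc_in D (Nt - 1) M' g' lam' ws' (pstate A B D (Nt - 1) M' g' lam' ws' x' k) k \<in> U
               \<and> (Nt - 1 \<le> k \<longrightarrow> lam' k (pstate A B D (Nt - 1) M' g' lam' ws' x' k)
                                   \<in> Lam D (pstate A B D (Nt - 1) M' g' lam' ws' x' k))"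
    proof (intro allI impI)
      fix k assume k: "k < N"
      show "pstate A B D (Nt - 1) M' g' lam' ws' x' k \<in> X
               \<and> lmpc_in D (Nt - 1) M' g' lam' ws' (pstate A B D (Nt - 1) M' g' lam' ws' x' k) k \<in> U
               \<and> (Nt - 1 \<le> k \<longrightarrow> lam' k (pstate A B D (Nt - 1) M' g' lam' ws' x' k)
                                   \<in> Lam D (pstate A B D (Nt - 1) M' g' lam' ws' x' k))"
      proof (cases "k = N - 1")
        case True
        have p: "pstate A B D (Nt - 1) M' g' lam' ws' x' k = ?y" using True yN by simp
        have lk: "lam' k ?y = (SOME l. l \<in> Lam D ?y)" using True by (simp add: lam'_def)
        have ik: "lmpc_in D (Nt - 1) M' g' lam' ws' ?y k \<in> U" using True inN uN by simp
        have "?y \<in> X" using FT CSX by blast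
        then show ?thesis unfolding p lk using ik lS by blast
      next
        case False
        then have k1: "k < N - 1" "Suc k < N" using k by auto
        let ?P = "pstate A B D Nt M g lam ?ws x (Suc k)"
        have p: "pstate A B D (Nt - 1) M' g' lam' ws' x' k = ?P"
          using st k1 by simp
        have lk: "lam' k = lam (Suc k)" using False by (simp add: lam'_def)
        have Fk: "?P \<in> X \<and> lmpc_in D Nt M g lam ?ws ?P (Suc k) \<in> U \<and> (Nt \<le> Suc k \<longrightarrow> lam (Suc k) ?P \<in> Lam D ?P)"
          using F k1(2) by blast
        have ar: "Nt - 1 \<le> k \<longrightarrow> Nt \<le> Suc k" by arith
        show ?thesis unfolding p lk inp[OF k1(1)] using Fk ar by blast
      qed
    qed
    have "pstate A B D (Nt - 1) M' g' lam' ws' x' N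
        = A *v ?y + B *v (\<Sum>c\<in>D. l c *\<^sub>R fst (snd c)) + ws' (N - 1)"
    proof -
      have NN: "N = Suc (N - 1)" using N1 by simp
      have e: "pstate A B D (Nt - 1) M' g' lam' ws' x' N = pstate A B D (Nt - 1) M' g' lam' ws' x' (Suc (N - 1))"
        using NN by (rule arg_cong)
      show ?thesis by (simp only: e pstate.simps(2) yN inN)
    qed
    also have "\<dots> = (\<Sum>c\<in>D. l c *\<^sub>R (A *v fst c + B *v fst (snd c) + ws' (N - 1)))"
    proof -
      have "(\<Sum>c\<in>D. l c *\<^sub>R ws' (N - 1)) = ws' (N - 1)" using l(3) by (simp add: scaleR_sum_left[symmetric])
      then show ?thesis
        by (simp add: l(2)[symmetric] Amul_sum scaleR_add_right sum.distrib)
    qed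
    also have "\<dots> \<in> CS"
    proof (rule convex_sum[OF fD _ l(3)])
      show "convex CS" unfolding hull by simp
      show "\<And>i. i \<in> D \<Longrightarrow> 0 \<le> l i" using l(1) by blast
      show "\<And>i. i \<in> D \<Longrightarrow> A *v fst i + B *v fst (snd i) + ws' (N - 1) \<in> CS"
        using cols ws' N1 by auto
    qed
    finally show "pstate A B D (Nt - 1) M' g' lam' ws' x' N \<in> CS" .
  qed
  then show ?thesis unfolding x'_def by blast
qed



lemma feas_first:
  fixes A :: "real^'n^'n" and B :: "real^'d^'n" and D :: "('n, 'd) col set"
  assumes "lmpc_feasible A B W X U D CS N x Nt M g lam" "0 \<in> W" "0 < N"
  shows "x \<in> X \<and> lmpc_in D Nt M g lam (\<lambda>_. 0) x 0 \<in> U"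
proof -
  have H: "pstate A B D Nt M g lam ws x 0 \<in> X \<and> lmpc_in D Nt M g lam ws (pstate A B D Nt M g lam ws x 0) 0 \<in> U"
    if "\<forall>k<N. ws k \<in> W" for ws
    using assms(1,3) that unfolding lmpc_feasible_def by blast
  show ?thesis using H[of "\<lambda>_. 0"] assms(2) by simp
qed

theorem theorem1:
  fixes A :: "real^'n^'n" and B :: "real^'d^'n" and K :: "real^'n^'d"
    and W Ob X :: "(real^'n) set" and U :: "(real^'d) set"
    and h :: "real^'n \<Rightarrow> real^'d \<Rightarrow> real" and N j :: nat
    and T :: "nat \<Rightarrow> nat" and xt wt :: "nat \<Rightarrow> nat \<Rightarrow> real^'n"
    and pol :: "nat \<Rightarrow> nat \<Rightarrow> nat \<Rightarrow> real^'n \<Rightarrow> real^'d"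
    and xcl wcl :: "nat \<Rightarrow> real^'n" and ucl :: "nat \<Rightarrow> real^'d" and Ncl :: "nat \<Rightarrow> nat"
    and Mcl :: "nat \<Rightarrow> nat \<Rightarrow> nat \<Rightarrow> real^'n^'d" and gcl :: "nat \<Rightarrow> nat \<Rightarrow> real^'d"
    and lcl :: "nat \<Rightarrow> nat \<Rightarrow> real^'n \<Rightarrow> ('n, 'd) col \<Rightarrow> real"
  assumes W: "polytope W" "0 \<in> W"
    and X: "convex X" "compact X" "0 \<in> X"
    and U: "convex U" "compact U" "0 \<in> U"
    and Ob: "polyhedron Ob" "Ob \<subseteq> X" "(\<lambda>x. K *v x) ` Ob \<subseteq> U"
           "\<forall>x\<in>Ob. \<forall>w\<in>W. (A + B ** K) *v x + w \<in> Ob"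
    and h_cont: "continuous_on UNIV (\<lambda>p. h (fst p) (snd p))"
    and h_convex: "convex_on UNIV (\<lambda>p. h (fst p) (snd p))"
    and h_bounds: "\<exists>alx aux alu auu. Kinf alx \<and> Kinf aux \<and> Kinf alu \<and> Kinf auu \<and>
        (\<forall>x. alx (infdist x Ob) \<le> h x 0 \<and> h x 0 \<le> aux (infdist x Ob)) \<and>
        (\<forall>u. alu (infdist u ((\<lambda>x. K *v x) ` Ob)) \<le> h 0 u \<and>
             h 0 u \<le> auu (infdist u ((\<lambda>x. K *v x) ` Ob)))"
    and N: "N \<ge> 1"
    and j: "j \<ge> 1"
    and iter_traj: "\<forall>i. 1 \<le> i \<and> i < j \<longrightarrow> (\<forall>t<T i.
        xt i (Suc t) = A *v xt i t + B *v pol i t t (xt i t) + wt i t \<and> wt i t \<in> W)"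
    and iter_constr: "\<forall>i. 1 \<le> i \<and> i < j \<longrightarrow> (\<forall>t\<le>T i. \<forall>k<N.
        \<forall>x\<in>reach A B W xt pol i t k. x \<in> X \<and> pol i t (t + k) x \<in> U)"
    and iter_term: "\<forall>i. 1 \<le> i \<and> i < j \<longrightarrow> (\<forall>t\<le>T i.
        reach A B W xt pol i t N \<subseteq> CSset A B W N Ob T xt pol (i - 1))"
    and iter_poly: "\<forall>i. 1 \<le> i \<and> i < j \<longrightarrow> (\<forall>t\<le>T i. \<forall>k\<le>N.
        polytope (reach A B W xt pol i t k))"
    and x0: "\<exists>N0\<le>N. lmpc_value A B W X U h (Dset A B W h N K Ob T xt pol (j - 1))
                  (CSset A B W N Ob T xt pol (j - 1)) N (xcl 0) N0 < \<infinity>"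
    and w_cl: "\<forall>t. wcl t \<in> W"
    and u_cl: "\<forall>t. ucl t = lmpc_in (Dset A B W h N K Ob T xt pol (j - 1)) (Ncl t) (Mcl t) (gcl t)
                             (lcl t) (\<lambda>_. 0) (xcl t) 0"
    and x_cl: "\<forall>t. xcl (Suc t) = A *v xcl t + B *v ucl t + wcl t"
    and opt: "\<forall>t. (\<exists>N'\<le>N. lmpc_value A B W X U h (Dset A B W h N K Ob T xt pol (j - 1))
                  (CSset A B W N Ob T xt pol (j - 1)) N (xcl t) N' < \<infinity>) \<longrightarrow>
        (lmpc_feasible A B W X U (Dset A B W h N K Ob T xt pol (j - 1))
            (CSset A B W N Ob T xt pol (j - 1)) N (xcl t) (Ncl t) (Mcl t) (gcl t) (lcl t)
         \<and> lmpc_cost A B h (Dset A B W h N K Ob T xt pol (j - 1)) N (xcl t) (Ncl t) (Mcl t) (gcl t) (lcl t)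
             = lmpc_value A B W X U h (Dset A B W h N K Ob T xt pol (j - 1))
                  (CSset A B W N Ob T xt pol (j - 1)) N (xcl t) (Ncl t)
         \<and> (\<forall>N'\<le>N. lmpc_value A B W X U h (Dset A B W h N K Ob T xt pol (j - 1))
                  (CSset A B W N Ob T xt pol (j - 1)) N (xcl t) (Ncl t)
               \<le> lmpc_value A B W X U h (Dset A B W h N K Ob T xt pol (j - 1))
                  (CSset A B W N Ob T xt pol (j - 1)) N (xcl t) N'))"
  shows "\<forall>t. (\<exists>Nt\<le>N. lmpc_value A B W X U h (Dset A B W h N K Ob T xt pol (j - 1))
                  (CSset A B W N Ob T xt pol (j - 1)) N (xcl t) Nt < \<infinity>)
            \<and> xcl t \<in> X \<and> ucl t \<in> U"
  proof -
  let ?D = "Dset A B W h N K Ob T xt pol (j - 1)"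
  let ?CS = "CSset A B W N Ob T xt pol (j - 1)"
  have Xb: "bounded X" using X(2) compact_imp_bounded by blast
  have jj: "j - 1 < j" using j by simp
  have dp: "finite ?D \<and> ?CS = convex hull (fst ` ?D) \<and> ?CS \<subseteq> X
     \<and> (\<forall>c\<in>?D. fst (snd c) \<in> U \<and> snd (snd c) < \<infinity>
          \<and> (\<forall>w\<in>W. A *v fst c + B *v fst (snd c) + w \<in> ?CS))"
    using data_props[OF W(2) X(1) Xb U(1) Ob iter_constr iter_term iter_poly jj] by blast
  have fD: "finite ?D" using dp by (rule conjunct1)
  have hl: "?CS = convex hull (fst ` ?D)" using dp by (rule conjunct2[THEN conjunct1])
  have CSX: "?CS \<subseteq> X" using dp by (rule conjunct2[THEN conjunct2, THEN conjunct1])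
  have dp4: "\<forall>c\<in>?D. fst (snd c) \<in> U \<and> snd (snd c) < \<infinity>
          \<and> (\<forall>w\<in>W. A *v fst c + B *v fst (snd c) + w \<in> ?CS)"
    using dp by (rule conjunct2[THEN conjunct2, THEN conjunct2])
  have cols: "\<forall>c\<in>?D. fst (snd c) \<in> U \<and> (\<forall>w\<in>W. A *v fst c + B *v fst (snd c) + w \<in> ?CS)"
    using dp4 by blast
  have colsJ: "\<forall>c\<in>?D. snd (snd c) < \<infinity>" using dp4 by blast
  have P: "\<exists>Nt\<le>N. lmpc_value A B W X U h ?D ?CS N (xcl t) Nt < \<infinity>" for t
  proof (induction t)
    case 0 then show ?case using x0 by blast
  next
    case (Suc t)
    then have feas: "lmpc_feasible A B W X U ?D ?CS N (xcl t) (Ncl t) (Mcl t) (gcl t) (lcl t)"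
      using opt by blast
    then have NclN: "Ncl t \<le> N" unfolding lmpc_feasible_def by simp
    have xs: "xcl (Suc t) = A *v xcl t + B *v lmpc_in ?D (Ncl t) (Mcl t) (gcl t) (lcl t) (\<lambda>_. 0) (xcl t) 0 + wcl t"
      using x_cl u_cl by simp
    obtain M' g' lam' where f': "lmpc_feasible A B W X U ?D ?CS N (xcl (Suc t)) (Ncl t - 1) M' g' lam'"
      using shift_feasible[OF feas N fD hl CSX U(1) cols, of "wcl t"] w_cl unfolding xs by blast
    have "lmpc_value A B W X U h ?D ?CS N (xcl (Suc t)) (Ncl t - 1) < \<infinity>"
      using value_fin[OF f' W(2) fD _ colsJ] hl by blast
    moreover have "Ncl t - 1 \<le> N" using NclN by simp
    ultimately show ?case by blast
  qed
  show ?thesis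
  proof
    fix t
    have feas: "lmpc_feasible A B W X U ?D ?CS N (xcl t) (Ncl t) (Mcl t) (gcl t) (lcl t)"
      using opt P by blast
    have N0: "0 < N" using N by simp
    have "xcl t \<in> X \<and> ucl t \<in> U" using feas_first[OF feas W(2) N0] u_cl by simp
    then show "(\<exists>Nt\<le>N. lmpc_value A B W X U h ?D ?CS N (xcl t) Nt < \<infinity>) \<and> xcl t \<in> X \<and> ucl t \<in> U"
      using P by blast
  qed
qed


end
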